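(* Let $G$ be a finite simple graph with a normal spanning tree $T$ rooted at $r$ such that $G$ has no secant edges with respect to $T$, and suppose $T$ is a whip. Then $G$ has a proper $3$-coloring in which all leaves of $T$ (vertices of $T$ having no children) receive the same color.
   Context: For a tree $T$ rooted at $r$, write $y\le_T x$ if $y$ lies on the $rx$-path of $T$; the children (successors) of $x$ are its neighbors $z$ with $x\le_T z$. $T$ is normal in $G$ if for every edge $xy$ of $G$, $x\le_T y$ or $y\le_T x$. Two edges $e,e'$ of $G$ are secant with respect to $T$ if there is a path $P=x_1\dots x_n$ in $T$ with $x_1=r$ containing the ends of $e,e'$ such that, with respect to the enumeration $x_1\dots x_n$, both are jumps (an edge $x_ix_j$ with $|i-j|>1$) and, writing them $x_lx_m$, $x_px_q$ with $l<m$, $p<q$, we have $l<p<m<q$ or $p<l<q<m$. A star$^0$-like tree is a tree having exactly one vertex of degree strictly greater than $2$, called its node. A whip is a rooted star$^0$-like tree in which every child of its node is a leaf. *)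

theory Defs
  imports Main
begin

definition simple_graph :: "'a set \<Rightarrow> 'a set set \<Rightarrow> bool" where
  "simple_graph V E \<longleftrightarrow> finite V \<and> (\<forall>e\<in>E. e \<subseteq> V \<and> card e = 2)"

definition is_path :: "'a set set \<Rightarrow> 'a list \<Rightarrow> bool" where
  "is_path Es xs \<longleftrightarrow> xs \<noteq> [] \<and> distinct xs \<and>
     (\<forall>i. Suc i < length xs \<longrightarrow> {xs ! i, xs ! Suc i} \<in> Es)"

definition graph_connected :: "'a set \<Rightarrow> 'a set set \<Rightarrow> bool" where
  "graph_connected V Es \<longleftrightarrow>
     (\<forall>x\<in>V. \<forall>y\<in>V. \<exists>xs. is_path Es xs \<and> set xs \<subseteq> V \<and> hd xs = x \<and> last xs = y)"

definition graph_acyclic :: "'a set set \<Rightarrow> bool" where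
  "graph_acyclic Es \<longleftrightarrow>
     \<not> (\<exists>xs. length xs \<ge> 3 \<and> is_path Es xs \<and> {last xs, hd xs} \<in> Es)"

definition is_tree :: "'a set \<Rightarrow> 'a set set \<Rightarrow> bool" where
  "is_tree V Es \<longleftrightarrow> V \<noteq> {} \<and> simple_graph V Es \<and> graph_connected V Es \<and> graph_acyclic Es"

definition spanning_tree :: "'a set \<Rightarrow> 'a set set \<Rightarrow> 'a set set \<Rightarrow> bool" where
  "spanning_tree V E TE \<longleftrightarrow> TE \<subseteq> E \<and> is_tree V TE"

definition tree_le :: "'a set set \<Rightarrow> 'a \<Rightarrow> 'a \<Rightarrow> 'a \<Rightarrow> bool" where
  "tree_le TE r y x \<longleftrightarrow> (\<exists>xs. is_path TE xs \<and> hd xs = r \<and> last xs = x \<and> y \<in> set xs)"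

definition tree_children :: "'a set set \<Rightarrow> 'a \<Rightarrow> 'a \<Rightarrow> 'a set" where
  "tree_children TE r x = {z. {x, z} \<in> TE \<and> tree_le TE r x z}"

definition tree_leaf :: "'a set \<Rightarrow> 'a set set \<Rightarrow> 'a \<Rightarrow> 'a \<Rightarrow> bool" where
  "tree_leaf V TE r x \<longleftrightarrow> x \<in> V \<and> tree_children TE r x = {}"

definition normal_tree :: "'a set set \<Rightarrow> 'a set set \<Rightarrow> 'a \<Rightarrow> bool" where
  "normal_tree E TE r \<longleftrightarrow> (\<forall>x y. {x, y} \<in> E \<longrightarrow> tree_le TE r x y \<or> tree_le TE r y x)"

definition secant :: "'a set set \<Rightarrow> 'a \<Rightarrow> 'a set \<Rightarrow> 'a set \<Rightarrow> bool" where
  "secant TE r e e' \<longleftrightarrow>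
     (\<exists>xs l m p q. is_path TE xs \<and> hd xs = r \<and>
        l < m \<and> p < q \<and> m < length xs \<and> q < length xs \<and>
        e = {xs ! l, xs ! m} \<and> e' = {xs ! p, xs ! q} \<and>
        m - l > 1 \<and> q - p > 1 \<and>
        ((l < p \<and> p < m \<and> m < q) \<or> (p < l \<and> l < q \<and> q < m)))"

definition no_secant_edges :: "'a set set \<Rightarrow> 'a set set \<Rightarrow> 'a \<Rightarrow> bool" where
  "no_secant_edges E TE r \<longleftrightarrow> (\<forall>e\<in>E. \<forall>e'\<in>E. \<not> secant TE r e e')"

definition tree_degree :: "'a set set \<Rightarrow> 'a \<Rightarrow> nat" where
  "tree_degree TE x = card {y. {x, y} \<in> TE}"

definition star0_like :: "'a set \<Rightarrow> 'a set set \<Rightarrow> bool" where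
  "star0_like V TE \<longleftrightarrow> (\<exists>!v. v \<in> V \<and> tree_degree TE v > 2)"

definition whip :: "'a set \<Rightarrow> 'a set set \<Rightarrow> 'a \<Rightarrow> bool" where
  "whip V TE r \<longleftrightarrow> r \<in> V \<and> is_tree V TE \<and>
star0_like V TE \<and>
     (\<forall>v. v \<in> V \<and> tree_degree TE v > 2 \<longrightarrow>
          (\<forall>z\<in>tree_children TE r v. tree_children TE r z = {}))"

definition proper_3_coloring :: "'a set \<Rightarrow> 'a set set \<Rightarrow> ('a \<Rightarrow> nat) \<Rightarrow> bool" where
  "proper_3_coloring V E c \<longleftrightarrow> c ` V \<subseteq> {0, 1, 2} \<and> (\<forall>x y. {x, y} \<in> E \<longrightarrow> c x \<noteq> c y)"

end

theory Submission
  imports Defs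
begin
lemma is_path_alt: "is_path E xs \<longleftrightarrow> xs \<noteq> [] \<and> distinct xs \<and> successively (\<lambda>a b. {a,b} \<in> E) xs"
  unfolding is_path_def successively_conv_nth by auto

lemma succ_sym: "successively (\<lambda>a b. {a,b} \<in> E) (rev xs) \<longleftrightarrow> successively (\<lambda>a b. {a,b} \<in> E) xs"
  by (simp add: insert_commute)

lemma path_take: "is_path E xs \<Longrightarrow> 0 < n \<Longrightarrow> is_path E (take n xs)"
  unfolding is_path_def by auto

lemma path_drop: "is_path E xs \<Longrightarrow> n < length xs \<Longrightarrow> is_path E (drop n xs)"
  unfolding is_path_alt by (auto simp: successively_conv_nth)

lemma path_snoc: "is_path E xs \<Longrightarrow> z \<notin> set xs \<Longrightarrow> {last xs, z} \<in> E \<Longrightarrow> is_path E (xs @ [z])"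
  unfolding is_path_alt by (auto simp: successively_append_iff)

lemma two_paths_cycle:
  assumes p1: "is_path E (a # xs)" and p2: "is_path E (a # ys)" and ne: "xs \<noteq> []" "ys \<noteq> []"
    and hdne: "hd xs \<noteq> hd ys" and la: "last xs = last ys"
  shows "\<not> graph_acyclic E"
proof -
  let ?P = "\<lambda>a b. {a,b} \<in> E"
  have "\<exists>x\<in>set xs. x \<in> set ys" using ne la by (metis last_in_set)
  then obtain p t s where xs: "xs = p @ t # s" and tin: "t \<in> set ys" and pn: "\<forall>y\<in>set p. y \<notin> set ys"
    using split_list_first_prop[of xs "\<lambda>x. x \<in> set ys"] by blast
  obtain q s' where ys: "ys = q @ t # s'" using tin by (meson split_list)
  define cyc where "cyc = a # p @ t # rev q"
  have s1: "successively ?P (a # p @ t # s)" and d1: "distinct (a # p @ t # s)"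
    using p1 xs by (auto simp: is_path_alt)
  have s2: "successively ?P (a # q @ t # s')" and d2: "distinct (a # q @ t # s')"
    using p2 ys by (auto simp: is_path_alt)
  have hq: "q = [] \<Longrightarrow> hd ys = t" "q \<noteq> [] \<Longrightarrow> hd ys = hd q" using ys by auto
  have "p \<noteq> [] \<or> q \<noteq> []" using hdne xs ys by auto
  then have len: "length cyc \<ge> 3" unfolding cyc_def by (cases p; cases q) auto
  have sp: "successively ?P (a # p @ [t])"
    using s1 successively_append_iff[of ?P "a # p @ [t]" s] by simp
  have sq0: "successively ?P ([a] @ (q @ [t]) @ s')" using s2 by simp
  have sq: "successively ?P (q @ [t])"
    using sq0 unfolding successively_append_iff by blast
  then have sq': "successively ?P (t # rev q)"
  proof -
    have "successively ?P (rev (q @ [t]))" using sq succ_sym by blast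
    then show ?thesis by simp
  qed
  have "successively ?P ((a # p) @ t # rev q)"
    using sp sq' by (auto simp: successively_append_iff successively_Cons hd_append split: if_splits)
  then have sc: "successively ?P cyc" unfolding cyc_def by simp
  have dc: "distinct cyc" using d1 d2 pn xs ys unfolding cyc_def by auto
  have "last cyc = hd ys" using hq unfolding cyc_def by (cases q) (auto simp: last_rev)
  moreover have "{a, hd ys} \<in> E" using p2 ne by (cases ys) (auto simp: is_path_alt)
  ultimately have "{last cyc, hd cyc} \<in> E" unfolding cyc_def by (simp add: insert_commute)
  moreover have "is_path E cyc" using sc dc unfolding is_path_alt by (simp add: cyc_def)
  ultimately show ?thesis using len unfolding graph_acyclic_def by blast
qed

lemma path_last_hd: "is_path E (a # zs) \<Longrightarrow> last (a # zs) = a \<Longrightarrow> zs = []"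
  by (cases zs rule: rev_cases) (auto simp: is_path_def)

lemma path_unique:
  assumes acyc: "graph_acyclic E"
  shows "is_path E xs \<Longrightarrow> is_path E ys \<Longrightarrow> hd xs = hd ys \<Longrightarrow> last xs = last ys \<Longrightarrow> xs = ys"
proof (induction xs arbitrary: ys)
  case Nil then show ?case by (simp add: is_path_def)
next
  case (Cons a xs)
  have "ys \<noteq> []" using Cons.prems(2) by (simp add: is_path_def)
  then obtain b ys' where "ys = b # ys'" by (cases ys) auto
  then have ys: "ys = a # ys'" using Cons.prems(3) by simp
  show ?case
  proof (cases "xs = [] \<or> ys' = []")
    case True
    have "xs = [] \<and> ys' = []"
    proof (cases "xs = []")
      case True
      have "last (a # xs) = a" using True by simp
      then have "last (a # ys') = a" using Cons.prems(4) ys by metis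
      from path_last_hd[OF Cons.prems(2)[unfolded ys] this] show ?thesis using True by simp
    next
      case False
      then have "ys' = []" using \<open>xs = [] \<or> ys' = []\<close> by simp
      have "last (a # ys') = a" using \<open>ys' = []\<close> by simp
      then have "last (a # xs) = a" using Cons.prems(4) ys by metis
      from path_last_hd[OF Cons.prems(1) this] show ?thesis using \<open>ys' = []\<close> by simp
    qed
    then show ?thesis using ys by simp
  next
    case False
    show ?thesis
    proof (cases "hd xs = hd ys'")
      case True
      have "is_path E xs" using path_drop[OF Cons.prems(1), of 1] False by simp
      moreover have "is_path E ys'" using path_drop[of E ys 1] Cons.prems ys False by simp
      moreover have "last xs = last ys'" using Cons.prems(4) ys False by simp
      ultimately have "xs = ys'" using Cons.IH True by blast
      then show ?thesis using ys by simp
    next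
      case hn: False
      have p2: "is_path E (a # ys')" using Cons.prems(2) ys by simp
      have l2: "last xs = last ys'" using Cons.prems(4) ys False by simp
      have "\<not> graph_acyclic E"
        using two_paths_cycle[OF Cons.prems(1) p2 _ _ hn l2] False by simp
      then show ?thesis using acyc by simp
    qed
  qed
qed

lemma col_interval:
  fixes adj :: "nat \<Rightarrow> nat \<Rightarrow> bool"
  assumes irr: "\<And>x. \<not> adj x x" and sym: "\<And>x y. adj x y \<Longrightarrow> adj y x"
    and nc: "\<And>a b c d. adj a b \<Longrightarrow> adj c d \<Longrightarrow> a < c \<Longrightarrow> c < b \<Longrightarrow> b < d \<Longrightarrow> False"
  shows "i < j \<Longrightarrow> (\<alpha>::nat) < 3 \<Longrightarrow> \<beta> < 3 \<Longrightarrow> \<alpha> \<noteq> \<beta> \<Longrightarrow>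
    \<exists>col. (\<forall>x. col x < (3::nat)) \<and> col i = \<alpha> \<and> col j = \<beta> \<and>
      (\<forall>x y. i \<le> x \<longrightarrow> x \<le> j \<longrightarrow> i \<le> y \<longrightarrow> y \<le> j \<longrightarrow> adj x y \<longrightarrow> col x \<noteq> col y)"
proof (induction "j - i" arbitrary: i j \<alpha> \<beta> rule: less_induct)
  case less
  show ?case
  proof (cases "j = Suc i")
    case True
    show ?thesis
      apply (rule exI[of _ "\<lambda>x. if x = i then \<alpha> else \<beta>"])
      using less.prems True irr by (auto simp: le_Suc_eq)
  next
    case False
    define S where "S = {b. i < b \<and> b < j \<and> adj i b}"
    define k where "k = (if S = {} then Suc i else Max S)"
    have finS: "finite S" unfolding S_def by auto
    have k1: "i < k \<and> k < j" using False less.prems Max_in[OF finS] unfolding k_def 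
      by (cases "S = {}") (auto simp: S_def)
    have k2: "\<And>b. k < b \<Longrightarrow> b < j \<Longrightarrow> \<not> adj i b"
    proof -
      fix b assume "k < b" "b < j"
      show "\<not> adj i b"
      proof
        assume "adj i b"
        then have "b \<in> S" using \<open>k < b\<close> \<open>b < j\<close> k1 by (auto simp: S_def)
        then have "b \<le> Max S" using finS by auto
        then show False using \<open>k < b\<close> \<open>b \<in> S\<close> unfolding k_def by (auto split: if_splits)
      qed
    qed
    have k3: "k \<noteq> Suc i \<Longrightarrow> adj i k"
      using Max_in[OF finS] unfolding k_def by (auto simp: S_def split: if_splits)
    define \<gamma> where "\<gamma> = 3 - \<alpha> - \<beta>"
    have g: "\<gamma> < 3" "\<gamma> \<noteq> \<alpha>" "\<gamma> \<noteq> \<beta>" using less.prems unfolding \<gamma>_def by presburger+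
    have d1: "k - i < j - i" and d2: "j - k < j - i" using k1 by auto
    obtain c1 where c1: "\<forall>x. c1 x < (3::nat)" "c1 i = \<alpha>" "c1 k = \<gamma>"
      "\<forall>x y. i \<le> x \<longrightarrow> x \<le> k \<longrightarrow> i \<le> y \<longrightarrow> y \<le> k \<longrightarrow> adj x y \<longrightarrow> c1 x \<noteq> c1 y"
      using less.hyps[OF d1, of \<alpha> \<gamma>] k1 less.prems g by auto
    obtain c2 where c2: "\<forall>x. c2 x < (3::nat)" "c2 k = \<gamma>" "c2 j = \<beta>"
      "\<forall>x y. k \<le> x \<longrightarrow> x \<le> j \<longrightarrow> k \<le> y \<longrightarrow> y \<le> j \<longrightarrow> adj x y \<longrightarrow> c2 x \<noteq> c2 y"
      using less.hyps[OF d2, of \<gamma> \<beta>] k1 less.prems g by auto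
    define col where "col = (\<lambda>x. if x \<le> k then c1 x else c2 x)"
    have cross: "x = i \<and> y = j" if "i \<le> x" "x < k" "k < y" "y \<le> j" "adj x y" for x y
    proof -
      have "x = i"
      proof (rule ccontr)
        assume "x \<noteq> i"
        then have "k \<noteq> Suc i" using that by auto
        then have "adj i k" using k3 by auto
        then show False using nc[of i k x y] that \<open>x \<noteq> i\<close> by auto
      qed
      moreover have "y = j" using k2[of y] that \<open>x = i\<close> by (cases "y = j") auto
      ultimately show ?thesis by auto
    qed
    have col_k: "col k = c2 k" using c1 c2 by (simp add: col_def)
    show ?thesis
    proof (rule exI[of _ col], intro conjI allI impI)
      fix x show "col x < 3" using c1 c2 by (simp add: col_def)
    next
      show "col i = \<alpha>" using c1 k1 by (simp add: col_def)
    next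
      show "col j = \<beta>" using c2 k1 by (simp add: col_def)
    next
      fix x y assume h: "i \<le> x" "x \<le> j" "i \<le> y" "y \<le> j" "adj x y"
      consider "x \<le> k" "y \<le> k" | "k \<le> x" "k \<le> y" | "x < k" "k < y" | "y < k" "k < x" by linarith
      then show "col x \<noteq> col y"
      proof cases
        case 1 then show ?thesis using c1 h by (auto simp: col_def)
      next
        case 2
        have "col x = c2 x" "col y = c2 y" using 2 col_k by (auto simp: col_def)
        then show ?thesis using c2 h 2 by auto
      next
        case 3
        then have "x = i \<and> y = j" using cross h by auto
        then show ?thesis using 3 c1 c2 less.prems by (auto simp: col_def)
      next
        case 4
        then have "y = i \<and> x = j" using cross h sym by auto
        then show ?thesis using 4 c1 c2 less.prems by (auto simp: col_def)
      qed
    qed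
  qed
qed

lemma path_edge: "is_path E xs \<Longrightarrow> Suc i < length xs \<Longrightarrow> {xs!i, xs!Suc i} \<in> E"
  unfolding is_path_def by auto

lemma last_take_Suc: "i < length xs \<Longrightarrow> last (take (Suc i) xs) = xs ! i"
  by (simp add: take_Suc_conv_app_nth)

locale wctx =
  fixes V :: "'a set" and E TE :: "'a set set" and r :: 'a
  assumes sg: "simple_graph V E" and st: "spanning_tree V E TE" and rV: "r \<in> V"
    and nt: "normal_tree E TE r" and ns: "no_secant_edges E TE r" and wh: "whip V TE r"
begin

lemma tree: "is_tree V TE" using st by (simp add: spanning_tree_def)
lemma acyc: "graph_acyclic TE" using tree by (simp add: is_tree_def)
lemma finV: "finite V" using sg by (simp add: simple_graph_def)

lemma card2_ne: "card {a, b} = 2 \<Longrightarrow> a \<noteq> b" by (cases "a = b") auto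

lemma tedge: assumes "{a,b} \<in> TE" shows "a \<in> V \<and> b \<in> V \<and> a \<noteq> b"
proof -
  have "\<forall>e\<in>TE. e \<subseteq> V \<and> card e = 2" using tree by (simp add: is_tree_def simple_graph_def)
  from this[rule_format, OF assms] show ?thesis using card2_ne by auto
qed

lemma eedge: assumes "{a,b} \<in> E" shows "a \<in> V \<and> b \<in> V \<and> a \<noteq> b"
proof -
  have "\<forall>e\<in>E. e \<subseteq> V \<and> card e = 2" using sg by (simp add: simple_graph_def)
  from this[rule_format, OF assms] show ?thesis using card2_ne by auto
qed

lemma path_in_V: assumes "is_path TE xs" "hd xs \<in> V" shows "set xs \<subseteq> V"
proof
  fix y assume "y \<in> set xs"
  then obtain i where i: "i < length xs" "xs ! i = y" by (auto simp: in_set_conv_nth)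
  show "y \<in> V"
  proof (cases i)
    case 0 then show ?thesis using i assms by (cases xs) auto
  next
    case (Suc j)
    then have "{xs!j, xs!Suc j} \<in> TE" using path_edge[OF assms(1)] i by auto
    then show ?thesis using tedge i Suc by auto
  qed
qed

definition pth :: "'a \<Rightarrow> 'a list" where
  "pth x = (THE xs. is_path TE xs \<and> hd xs = r \<and> last xs = x)"

lemma pth_ex: "x \<in> V \<Longrightarrow> \<exists>xs. is_path TE xs \<and> hd xs = r \<and> last xs = x"
  using tree rV unfolding is_tree_def graph_connected_def by blast

lemma pth: assumes "x \<in> V" shows "is_path TE (pth x)" "hd (pth x) = r" "last (pth x) = x"
proof -
  obtain xs where xs: "is_path TE xs \<and> hd xs = r \<and> last xs = x" using pth_ex[OF assms] by blast
  have "\<exists>!xs. is_path TE xs \<and> hd xs = r \<and> last xs = x"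
  proof (rule ex1I[of _ xs])
    fix ys assume "is_path TE ys \<and> hd ys = r \<and> last ys = x"
    then show "ys = xs" using path_unique[OF acyc, of ys xs] xs by simp
  qed (rule xs)
  then have "is_path TE (pth x) \<and> hd (pth x) = r \<and> last (pth x) = x"
    unfolding pth_def by (rule theI')
  then show "is_path TE (pth x)" "hd (pth x) = r" "last (pth x) = x" by auto
qed

lemma pth_eq: assumes "is_path TE xs" "hd xs = r" shows "pth (last xs) = xs"
proof -
  have ne: "xs \<noteq> []" using assms by (simp add: is_path_def)
  have "last xs \<in> V" using path_in_V[OF assms(1)] assms rV ne by auto
  then show ?thesis using pth[of "last xs"] path_unique[OF acyc, of "pth (last xs)" xs] assms by simp
qed

lemma pth_nth: assumes "is_path TE xs" "hd xs = r" "i < length xs"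
  shows "pth (xs ! i) = take (Suc i) xs"
proof -
  have "is_path TE (take (Suc i) xs)" using path_take[OF assms(1)] by auto
  moreover have "hd (take (Suc i) xs) = r" using assms by (cases xs) auto
  ultimately have "pth (last (take (Suc i) xs)) = take (Suc i) xs" by (rule pth_eq)
  then show ?thesis using last_take_Suc[OF assms(3)] by simp
qed

definition dep :: "'a \<Rightarrow> nat" where "dep x = length (pth x) - 1"

lemma pth_len: "x \<in> V \<Longrightarrow> length (pth x) = Suc (dep x)"
  using pth(1)[of x] unfolding dep_def is_path_def by (cases "pth x") auto

lemma pth_dep: assumes "x \<in> V" shows "pth x ! dep x = x"
proof -
  have "pth x \<noteq> []" using pth_len[OF assms] by auto
  then show ?thesis using pth(3)[OF assms] pth_len[OF assms] by (metis last_conv_nth diff_Suc_1)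
qed

lemma pth0: assumes "x \<in> V" shows "pth x ! 0 = r"
proof -
  have "pth x \<noteq> []" using pth_len[OF assms] by auto
  then show ?thesis using pth(2)[OF assms] by (metis hd_conv_nth)
qed

lemma pth_r: "pth r = [r]"
  using pth_eq[of "[r]"] by (simp add: is_path_def)

lemma dep_r: "dep r = 0" using pth_r by (simp add: dep_def)

lemma dep0: "x \<in> V \<Longrightarrow> dep x = 0 \<Longrightarrow> x = r"
  using pth_dep[of x] pth0[of x] by simp

lemma in_pth: assumes "x \<in> V" "y \<in> set (pth x)"
  obtains i where "i \<le> dep x" "pth x ! i = y" "pth y = take (Suc i) (pth x)" "dep y = i"
proof -
  obtain i where i: "i < length (pth x)" "pth x ! i = y" using assms(2) by (auto simp: in_set_conv_nth)
  have p: "pth y = take (Suc i) (pth x)" using pth_nth[OF pth(1,2)[OF assms(1)] i(1)] i(2) by simp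
  have d: "dep y = i" unfolding dep_def p using i(1) by simp
  have "i \<le> dep x" using i(1) pth_len[OF assms(1)] by simp
  then show ?thesis using that i(2) p d by blast
qed

lemma pth_take_nth: assumes "x \<in> V" "i \<le> dep x"
  shows "pth (pth x ! i) = take (Suc i) (pth x)" "dep (pth x ! i) = i" "pth x ! i \<in> V"
proof -
  have il: "i < length (pth x)" using pth_len[OF assms(1)] assms(2) by simp
  show 1: "pth (pth x ! i) = take (Suc i) (pth x)"
    using pth_nth[OF pth(1,2)[OF assms(1)] il] .
  then show "dep (pth x ! i) = i" using il by (simp add: dep_def)
  have "pth x ! i \<in> set (pth x)" using il by (rule nth_mem)
  moreover have "set (pth x) \<subseteq> V" using path_in_V[OF pth(1)[OF assms(1)]] pth(2)[OF assms(1)] rV by simp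
  ultimately show "pth x ! i \<in> V" by blast
qed

lemma tle: "tree_le TE r y x \<longleftrightarrow> x \<in> V \<and> y \<in> set (pth x)"
proof
  assume "tree_le TE r y x"
  then have "\<exists>xs. is_path TE xs \<and> hd xs = r \<and> last xs = x \<and> y \<in> set xs"
    by (simp add: tree_le_def)
  then obtain xs where xs: "is_path TE xs" "hd xs = r" "last xs = x" "y \<in> set xs"
    by blast
  have px: "pth x = xs" using pth_eq[OF xs(1,2)] xs(3) by simp
  have sub: "set xs \<subseteq> V" using path_in_V[OF xs(1)] xs(2) rV by simp
  have "xs \<noteq> []" using xs(1) by (simp add: is_path_def)
  then have "last xs \<in> set xs" by simp
  then have "x \<in> V" using xs(3) sub by auto
  then show "x \<in> V \<and> y \<in> set (pth x)" using px xs(4) by simp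
next
  assume h: "x \<in> V \<and> y \<in> set (pth x)"
  then have "is_path TE (pth x)" "hd (pth x) = r" "last (pth x) = x" using pth[of x] by auto
  then show "tree_le TE r y x" unfolding tree_le_def using h by (intro exI[of _ "pth x"]) simp
qed

lemma pth_edge: "x \<in> V \<Longrightarrow> Suc i \<le> dep x \<Longrightarrow> {pth x ! i, pth x ! Suc i} \<in> TE"
  using path_edge[OF pth(1)[of x]] pth_len[of x] by auto

lemma pth_distinct: "x \<in> V \<Longrightarrow> distinct (pth x)"
  using pth(1)[of x] by (simp add: is_path_def)

lemma pth_nth_inj: "x \<in> V \<Longrightarrow> i \<le> dep x \<Longrightarrow> j \<le> dep x \<Longrightarrow> pth x ! i = pth x ! j \<Longrightarrow> i = j"
  using pth_distinct[of x] pth_len[of x] by (simp add: nth_eq_iff_index_eq)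

lemma nbr: assumes "x \<in> V" "{x,z} \<in> TE"
  shows "pth z = pth x @ [z] \<or> pth x = pth z @ [x]"
proof (cases "z \<in> set (pth x)")
  case False
  have "is_path TE (pth x @ [z])"
    using path_snoc[OF pth(1)[OF assms(1)] False] pth(3)[OF assms(1)] assms(2) by simp
  then have "pth (last (pth x @ [z])) = pth x @ [z]"
    using pth_eq pth(2)[OF assms(1)] pth(1)[OF assms(1)] by (metis hd_append is_path_def)
  then show ?thesis by simp
next
  case True
  then obtain i where i: "i \<le> dep x" "pth x ! i = z" "pth z = take (Suc i) (pth x)"
    using in_pth[OF assms(1)] by metis
  have zx: "z \<noteq> x" using tedge[OF assms(2)] by auto
  then have "i \<noteq> dep x" using i pth_dep[OF assms(1)] by auto
  show ?thesis
  proof (cases "Suc i = dep x")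
    case True
    have "pth x = take (Suc (dep x)) (pth x)" using pth_len[OF assms(1)] by simp
    also have "\<dots> = take (Suc i) (pth x) @ [pth x ! dep x]"
      using True pth_len[OF assms(1)] by (metis lessI take_Suc_conv_app_nth)
    finally show ?thesis using i pth_dep[OF assms(1)] by simp
  next
    case False
    define cyc where "cyc = drop i (pth x)"
    have "is_path TE cyc" unfolding cyc_def
      using path_drop[OF pth(1)[OF assms(1)]] i pth_len[OF assms(1)] by auto
    moreover have "length cyc \<ge> 3" unfolding cyc_def using False \<open>i \<noteq> dep x\<close> i pth_len[OF assms(1)] by auto
    moreover have "hd cyc = z" unfolding cyc_def using i pth_len[OF assms(1)] by (simp add: hd_drop_conv_nth)
    moreover have "last cyc = x" unfolding cyc_def using i pth_len[OF assms(1)] pth(3)[OF assms(1)]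
      by (simp add: last_drop)
    ultimately show ?thesis using acyc assms(2) unfolding graph_acyclic_def by (metis insert_commute)
  qed
qed

lemma child_iff: "z \<in> tree_children TE r x \<longleftrightarrow> {x,z} \<in> TE \<and> x \<in> set (pth z)"
  unfolding tree_children_def using tle tedge by blast

lemma child_next: assumes "x \<in> V" "i < dep x" shows "pth x ! Suc i \<in> tree_children TE r (pth x ! i)"
proof -
  have "pth (pth x ! Suc i) = take (Suc (Suc i)) (pth x)" using pth_take_nth[OF assms(1)] assms(2) by simp
  then have "pth x ! i \<in> set (pth (pth x ! Suc i))" using pth_len[OF assms(1)] assms(2)
    by (simp add: in_set_conv_nth) (metis lessI less_SucI nth_take)
  then show ?thesis using child_iff pth_edge[OF assms(1)] assms(2) by auto
qed

end

context wctx begin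

definition node where "node = (THE v. v \<in> V \<and> tree_degree TE v > 2)"

lemma node: "node \<in> V" "tree_degree TE node > 2"
  and node_unique: "u \<in> V \<Longrightarrow> tree_degree TE u > 2 \<Longrightarrow> u = node"
proof -
  have ex: "\<exists>!v. v \<in> V \<and> tree_degree TE v > 2" using wh by (simp add: whip_def star0_like_def)
  then have "node \<in> V \<and> tree_degree TE node > 2" unfolding node_def by (rule theI')
  then show "node \<in> V" "tree_degree TE node > 2" by auto
  show "u \<in> V \<Longrightarrow> tree_degree TE u > 2 \<Longrightarrow> u = node"
    using ex \<open>node \<in> V \<and> tree_degree TE node > 2\<close> by blast
qed

lemma whip_leaf: "z \<in> tree_children TE r node \<Longrightarrow> tree_children TE r z = {}"
  using wh node by (simp add: whip_def)

lemma nbr_fin: "finite {y. {x,y} \<in> TE}"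
proof -
  have "{y. {x,y} \<in> TE} \<subseteq> V" using tedge by auto
  then show ?thesis using finV finite_subset by blast
qed

lemma three: assumes "x \<in> V" "{x,a} \<in> TE" "{x,b} \<in> TE" "{x,c} \<in> TE" "a \<noteq> b" "a \<noteq> c" "b \<noteq> c"
  shows "x = node"
proof -
  have "{a,b,c} \<subseteq> {y. {x,y} \<in> TE}" using assms by auto
  then have "card {a,b,c} \<le> card {y. {x,y} \<in> TE}" using nbr_fin by (rule card_mono[rotated])
  moreover have "card {a,b,c} = 3" using assms by auto
  ultimately have "tree_degree TE x > 2" unfolding tree_degree_def by simp
  then show ?thesis using node_unique assms(1) by blast
qed

abbreviation "v \<equiv> node"
abbreviation "W \<equiv> pth node"
abbreviation "m \<equiv> dep node"

lemma v_child: "\<exists>z. z \<in> tree_children TE r v"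
proof (rule ccontr)
  assume nc: "\<not> (\<exists>z. z \<in> tree_children TE r v)"
  have "{y. {v,y} \<in> TE} \<subseteq> {last (butlast W)}"
  proof
    fix y assume "y \<in> {y. {v,y} \<in> TE}"
    then have e: "{v,y} \<in> TE" by simp
    then have yV: "y \<in> V" using tedge by blast
    consider "pth y = W @ [y]" | "W = pth y @ [v]" using nbr[OF node(1) e] by blast
    then show "y \<in> {last (butlast W)}"
    proof cases
      case 1
      have "W \<noteq> []" using pth_len[OF node(1)] by auto
      then have "last W \<in> set W" by simp
      then have "v \<in> set W" using pth(3)[OF node(1)] by simp
      then have "v \<in> set (pth y)" using 1 by simp
      then have "y \<in> tree_children TE r v" using child_iff e by blast
      then show ?thesis using nc by blast
    next
      case 2
      then have "butlast W = pth y" by simp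
      then show ?thesis using pth(3)[OF yV] by simp
    qed
  qed
  then have "card {y. {v,y} \<in> TE} \<le> card {last (butlast W)}" by (intro card_mono) auto
  then have "card {y. {v,y} \<in> TE} \<le> 1" by simp
  then show False using node(2) unfolding tree_degree_def by simp
qed

lemma S1: assumes "x \<in> V" "v \<in> set (pth x)" "x \<noteq> v" shows "pth x = W @ [x]"
proof -
  obtain i where i: "i \<le> dep x" "pth x ! i = v" "W = take (Suc i) (pth x)" "m = i"
    using in_pth[OF assms(1,2)] by metis
  have "i \<noteq> dep x" using i(2) pth_dep[OF assms(1)] assms(3) by auto
  then have lt: "m < dep x" using i by simp
  have yc: "pth x ! Suc m \<in> tree_children TE r v" using child_next[OF assms(1) lt] i by simp
  have "dep x = Suc m"
  proof (rule ccontr)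
    assume "dep x \<noteq> Suc m"
    then have "Suc m < dep x" using lt by simp
    then have "pth x ! Suc (Suc m) \<in> tree_children TE r (pth x ! Suc m)" using child_next[OF assms(1)] by blast
    then show False using whip_leaf[OF yc] by blast
  qed
  have "pth x = take (Suc (Suc m)) (pth x)" using pth_len[OF assms(1)] \<open>dep x = Suc m\<close> by simp
  also have "\<dots> = take (Suc m) (pth x) @ [pth x ! Suc m]"
    using pth_len[OF assms(1)] \<open>dep x = Suc m\<close> by (intro take_Suc_conv_app_nth) simp
  also have "\<dots> = W @ [x]" using i pth_dep[OF assms(1)] \<open>dep x = Suc m\<close> by simp
  finally show ?thesis .
qed

lemma agree:
  assumes "x \<in> V" "y \<in> V" "pth x ! 1 = pth y ! 1"
  shows "n \<le> dep x \<Longrightarrow> n \<le> dep y \<Longrightarrow> (\<forall>i. 1 \<le> i \<longrightarrow> i < n \<longrightarrow> pth y ! i \<noteq> v) \<Longrightarrow>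
    take (Suc n) (pth x) = take (Suc n) (pth y)"
proof (induction n)
  case 0
  have "take (Suc 0) (pth x) = [pth x ! 0]" "take (Suc 0) (pth y) = [pth y ! 0]"
    using pth_len[OF assms(1)] pth_len[OF assms(2)] by (simp_all add: take_Suc_conv_app_nth)
  then show ?case using pth0[OF assms(1)] pth0[OF assms(2)] by simp
next
  case (Suc n)
  have IH: "take (Suc n) (pth x) = take (Suc n) (pth y)" using Suc by simp
  have lx: "take (Suc (Suc n)) (pth x) = take (Suc n) (pth x) @ [pth x ! Suc n]"
    using pth_len[OF assms(1)] Suc.prems by (intro take_Suc_conv_app_nth) simp
  have ly: "take (Suc (Suc n)) (pth y) = take (Suc n) (pth y) @ [pth y ! Suc n]"
    using pth_len[OF assms(2)] Suc.prems by (intro take_Suc_conv_app_nth) simp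
  have "pth x ! Suc n = pth y ! Suc n"
  proof (cases n)
    case 0 then show ?thesis using assms(3) by simp
  next
    case (Suc n')
    have eqn: "pth x ! j = pth y ! j" if "j \<le> n" for j
    proof -
      have "take (Suc n) (pth x) ! j = take (Suc n) (pth y) ! j" using IH by simp
      then show ?thesis using that by simp
    qed
    define a where "a = pth y ! n"
    define d where "d = pth y ! n'"
    have aV: "a \<in> V" unfolding a_def using pth_take_nth(3)[OF assms(2)] Suc.prems by simp
    have e1: "{a, d} \<in> TE" using pth_edge[OF assms(2), of n'] Suc.prems \<open>n = Suc n'\<close>
      unfolding a_def d_def by (simp add: insert_commute)
    have e2: "{a, pth y ! Suc n} \<in> TE" using pth_edge[OF assms(2), of n] Suc.prems unfolding a_def by simp
    have e3: "{a, pth x ! Suc n} \<in> TE" using pth_edge[OF assms(1), of n] Suc.prems eqn[of n] unfolding a_def by simp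
    have n1: "d \<noteq> pth y ! Suc n" unfolding d_def using pth_nth_inj[OF assms(2), of n' "Suc n"] Suc.prems \<open>n = Suc n'\<close> by auto
    have n2: "d \<noteq> pth x ! Suc n" unfolding d_def using pth_nth_inj[OF assms(1), of n' "Suc n"] Suc.prems \<open>n = Suc n'\<close> eqn[of n'] by auto
    have av: "a \<noteq> v" unfolding a_def using Suc.prems \<open>n = Suc n'\<close> by auto
    show ?thesis
    proof (rule ccontr)
      assume "pth x ! Suc n \<noteq> pth y ! Suc n"
      then have "a = v" using three[OF aV e1 e2 e3] n1 n2 by auto
      then show False using av by simp
    qed
  qed
  then show ?case using lx ly IH by simp
qed

end

context wctx begin

lemma W_len: "length W = Suc m" using pth_len[OF node(1)] .
lemma W_m: "W ! m = v" using pth_dep[OF node(1)] .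
lemma W_0: "W ! 0 = r" using pth0[OF node(1)] .
lemma r_in_W: "r \<in> set W" using W_0 W_len by (metis nth_mem zero_less_Suc)
lemma m0: "m = 0 \<Longrightarrow> v = r" using dep0[OF node(1)] by simp
lemma m1: "1 \<le> m \<Longrightarrow> r \<noteq> v" using dep_r by auto

definition Bs where "Bs = {x \<in> V. x \<noteq> r \<and> 1 \<le> m \<and> pth x ! 1 \<noteq> W ! 1}"
definition kk where "kk = Max (insert 0 (dep ` Bs))"
definition idx where "idx x = (if x \<in> Bs then m + 1 + kk - dep x else if x \<in> set W then dep x else m + 1)"

lemma W_elem: assumes "x \<in> set W"
  shows "x \<notin> Bs" "dep x \<le> m" "W ! dep x = x" "pth x = take (Suc (dep x)) W" "x \<in> V"
proof -
  obtain i where i: "i \<le> m" "W ! i = x" "pth x = take (Suc i) W" "dep x = i"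
    using in_pth[OF node(1) assms] by metis
  show "dep x \<le> m" "W ! dep x = x" "pth x = take (Suc (dep x)) W" using i by auto
  show "x \<in> V" using pth_take_nth(3)[OF node(1) i(1)] i(2) by simp
  show "x \<notin> Bs"
  proof
    assume xb: "x \<in> Bs"
    then have "x \<noteq> r" by (simp add: Bs_def)
    have "i \<noteq> 0"
    proof
      assume "i = 0"
      then show False using i(2) W_0 \<open>x \<noteq> r\<close> by simp
    qed
    then have "pth x ! 1 = W ! 1" using i(3) by simp
    then show False using xb by (simp add: Bs_def)
  qed
qed

lemma side: assumes "x \<in> V" "x \<notin> Bs" "x \<notin> set W" shows "pth x = W @ [x]"
proof -
  have xr: "x \<noteq> r" using assms(3) r_in_W by auto
  have xv: "x \<noteq> v" using assms(3) pth_dep[OF node(1)] W_len by (metis lessI nth_mem)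
  show ?thesis
  proof (cases "m = 0")
    case True
    then have "v = r" by (rule m0)
    moreover have "r \<in> set (pth x)" using pth0[OF assms(1)] pth_len[OF assms(1)] by (metis nth_mem zero_less_Suc)
    ultimately show ?thesis using S1[OF assms(1) _ xv] by simp
  next
    case False
    then have p1: "pth x ! 1 = W ! 1" using assms(1,2) xr by (simp add: Bs_def)
    have d1: "1 \<le> dep x" using dep0[OF assms(1)] xr by (cases "dep x") auto
    have nv: "\<forall>i. 1 \<le> i \<longrightarrow> i < n \<longrightarrow> W ! i \<noteq> v" if "n \<le> m" for n
    proof (intro allI impI)
      fix i assume "1 \<le> i" "i < n"
      show "W ! i \<noteq> v"
      proof
        assume "W ! i = v"
        then have "W ! i = W ! m" using W_m by simp
        then have "i = m" using pth_nth_inj[OF node(1), of i m] \<open>i < n\<close> that by simp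
        then show False using \<open>i < n\<close> that by simp
      qed
    qed
    have "\<not> dep x \<le> m"
    proof
      assume le: "dep x \<le> m"
      have "take (Suc (dep x)) (pth x) = take (Suc (dep x)) W"
        using agree[OF assms(1) node(1) p1 le_refl le nv[OF le]] .
      then have "pth x = take (Suc (dep x)) W" using pth_len[OF assms(1)] by simp
      then have "pth x ! dep x = W ! dep x" using le by simp
      then have "x = W ! dep x" using pth_dep[OF assms(1)] by simp
      moreover have "dep x < length W" using le W_len by simp
      ultimately have "x \<in> set W" using nth_mem by metis
      then show False using assms(3) by simp
    qed
    then have lt: "m < dep x" by simp
    have "take (Suc m) (pth x) = take (Suc m) W"
      using agree[OF assms(1) node(1) p1, of m] lt nv[of m] by simp
    then have "take (Suc m) (pth x) ! m = W ! m" using W_len by simp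
    then have "pth x ! m = v" using W_m by simp
    then have "v \<in> set (pth x)" using lt pth_len[OF assms(1)] by (metis Suc_lessD less_SucI nth_mem)
    then show ?thesis using S1[OF assms(1) _ xv] by simp
  qed
qed

lemma B_basic: assumes "x \<in> Bs" shows "x \<in> V" "x \<noteq> r" "1 \<le> m" "1 \<le> dep x" "pth x ! 1 \<noteq> W ! 1"
proof -
  show "x \<in> V" "x \<noteq> r" "1 \<le> m" "pth x ! 1 \<noteq> W ! 1" using assms by (auto simp: Bs_def)
  then show "1 \<le> dep x" using dep0 by (cases "dep x") auto
qed

lemma B_fin: "finite Bs" using finV by (simp add: Bs_def)

lemma B_first: assumes "x \<in> Bs" "y \<in> Bs" shows "pth x ! 1 = pth y ! 1"
proof (rule ccontr)
  assume ne: "pth x ! 1 \<noteq> pth y ! 1"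
  note bx = B_basic[OF assms(1)] and bb = B_basic[OF assms(2)]
  have e1: "{r, pth x ! 1} \<in> TE" using pth_edge[OF bx(1), of 0] bx(4) pth0[OF bx(1)] by simp
  have e2: "{r, pth y ! 1} \<in> TE" using pth_edge[OF bb(1), of 0] bb(4) pth0[OF bb(1)] by simp
  have e3: "{r, W ! 1} \<in> TE" using pth_edge[OF node(1), of 0] bx(3) W_0 by simp
  have "r = v" using three[OF rV e1 e2 e3 ne bx(5) bb(5)] .
  then show False using m1 bx(3) by simp
qed

lemma B_nov: assumes "x \<in> Bs" shows "v \<notin> set (pth x)"
proof
  assume "v \<in> set (pth x)"
  then obtain i where i: "i \<le> dep x" "W = take (Suc i) (pth x)" "m = i"
    using in_pth[OF B_basic(1)[OF assms]] by metis
  then have "W ! 1 = pth x ! 1" using B_basic(3)[OF assms] by simp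
  then show False using B_basic(5)[OF assms] by simp
qed

lemma B_chain: assumes "x \<in> Bs" "y \<in> Bs" "dep x \<le> dep y" shows "pth y ! dep x = x"
proof -
  note bx = B_basic[OF assms(1)] and bb = B_basic[OF assms(2)]
  have nv: "\<forall>i. 1 \<le> i \<longrightarrow> i < dep x \<longrightarrow> pth y ! i \<noteq> v"
  proof (intro allI impI)
    fix i assume "1 \<le> i" "i < dep x"
    then have "pth y ! i \<in> set (pth y)" using assms(3) pth_len[OF bb(1)] by simp
    then show "pth y ! i \<noteq> v" using B_nov[OF assms(2)] by auto
  qed
  have "take (Suc (dep x)) (pth x) = take (Suc (dep x)) (pth y)"
    using agree[OF bx(1) bb(1) B_first[OF assms(1,2)] le_refl assms(3) nv] .
  then have "take (Suc (dep x)) (pth x) ! dep x = take (Suc (dep x)) (pth y) ! dep x" by simp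
  then have "pth x ! dep x = pth y ! dep x" by simp
  then show ?thesis using pth_dep[OF bx(1)] by simp
qed

lemma B_inj: assumes "x \<in> Bs" "y \<in> Bs" "dep x = dep y" shows "x = y"
proof -
  have "x = pth y ! dep x" using B_chain[OF assms(1,2)] assms(3) by simp
  also have "\<dots> = pth y ! dep y" using assms(3) by (rule arg_cong)
  also have "\<dots> = y" using pth_dep[OF B_basic(1)[OF assms(2)]] .
  finally show ?thesis .
qed

lemma B_kk: "x \<in> Bs \<Longrightarrow> dep x \<le> kk"
  unfolding kk_def using B_fin by (intro Max_ge) auto

lemma B_max: assumes "Bs \<noteq> {}" shows "\<exists>z\<in>Bs. dep z = kk"
proof -
  have "kk \<in> insert 0 (dep ` Bs)" unfolding kk_def using B_fin by (intro Max_in) auto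
  moreover obtain x where x: "x \<in> Bs" using assms by blast
  have "1 \<le> kk" using B_kk[OF x] B_basic(4)[OF x] by simp
  ultimately show ?thesis by auto
qed

lemma B_edge: assumes "{x,y} \<in> E" "y \<in> Bs" shows "x = r \<or> x \<in> Bs"
proof -
  note bb = B_basic[OF assms(2)]
  have xV: "x \<in> V" using eedge[OF assms(1)] by simp
  have "tree_le TE r x y \<or> tree_le TE r y x" using nt assms(1) by (simp add: normal_tree_def)
  then have "(y \<in> V \<and> x \<in> set (pth y)) \<or> (x \<in> V \<and> y \<in> set (pth x))" by (simp add: tle)
  then have "x \<in> set (pth y) \<or> y \<in> set (pth x)" by blast
  then show ?thesis
  proof
    assume "x \<in> set (pth y)"
    then obtain i where i: "i \<le> dep y" "pth y ! i = x" "pth x = take (Suc i) (pth y)"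
      using in_pth[OF bb(1)] by metis
    show ?thesis
    proof (cases "i = 0")
      case True then show ?thesis using i pth0[OF bb(1)] by simp
    next
      case False
      then have "pth x ! 1 = pth y ! 1" using i(3) by simp
      then have "pth x ! 1 \<noteq> W ! 1" using bb(5) by simp
      moreover have "x \<noteq> r" using i(2) pth_nth_inj[OF bb(1), of i 0] pth0[OF bb(1)] False i(1) by auto
      ultimately show ?thesis using xV bb(3) by (simp add: Bs_def)
    qed
  next
    assume "y \<in> set (pth x)"
    then obtain i where i: "i \<le> dep x" "pth x ! i = y" "pth y = take (Suc i) (pth x)" "dep y = i"
      using in_pth[OF xV] by metis
    have "i \<noteq> 0" using i(4) bb(4) by simp
    then have "pth x ! 1 = pth y ! 1" using i(3) by simp
    then have "pth x ! 1 \<noteq> W ! 1" using bb(5) by simp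
    moreover have "x \<noteq> r"
    proof
      assume "x = r"
      then have "dep x = 0" using dep_r by simp
      then show False using i(1) \<open>i \<noteq> 0\<close> by simp
    qed
    ultimately show ?thesis using xV bb(3) by (simp add: Bs_def)
  qed
qed

lemma idx_B: assumes "x \<in> Bs" shows "idx x = m + 1 + kk - dep x \<and> m + 1 \<le> idx x \<and> idx x \<le> m + kk"
proof -
  have a: "dep x \<le> kk" "1 \<le> dep x" using B_kk[OF assms] B_basic(4)[OF assms] by auto
  have b: "idx x = m + 1 + kk - dep x" using assms by (simp add: idx_def)
  show ?thesis using a b by arith
qed

lemma idx_W: "x \<in> set W \<Longrightarrow> idx x = dep x \<and> dep x \<le> m"
  using W_elem[of x] by (simp add: idx_def)

lemma idx_L: "x \<in> V \<Longrightarrow> x \<notin> Bs \<Longrightarrow> x \<notin> set W \<Longrightarrow> idx x = m + 1"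
  by (simp add: idx_def)

lemma idx_r: "idx r = 0"
  using idx_W[OF r_in_W] dep_r by simp

lemma idx_pos: assumes "x \<in> V" "x \<noteq> r" shows "1 \<le> idx x"
proof -
  have "dep x \<noteq> 0" using dep0[OF assms(1)] assms(2) by auto
  then show ?thesis using idx_B[of x] idx_W[of x] idx_L[of x] assms by (cases "x \<in> Bs"; cases "x \<in> set W") auto
qed

lemma idx_le: "x \<in> V \<Longrightarrow> idx x \<le> m + kk + 1"
  using idx_B[of x] idx_W[of x] idx_L[of x] by (cases "x \<in> Bs"; cases "x \<in> set W") auto

lemma idx_nB: "x \<in> V \<Longrightarrow> x \<notin> Bs \<Longrightarrow> idx x \<le> m + 1"
  using idx_W[of x] idx_L[of x] by (cases "x \<in> set W") auto

lemma irr: assumes "{x,y} \<in> E" shows "idx x \<noteq> idx y"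
proof
  assume eq: "idx x = idx y"
  have xy: "x \<noteq> y" "x \<in> V" "y \<in> V" using eedge[OF assms] by auto
  have sym: "{y,x} \<in> E" using assms by (simp add: insert_commute)
  show False
  proof (cases "x \<in> Bs \<or> y \<in> Bs")
    case True
    then have rb: "(x = r \<or> x \<in> Bs) \<and> (y = r \<or> y \<in> Bs)" using B_edge[OF assms] B_edge[OF sym] by auto
    show False
    proof (cases "x \<in> Bs \<and> y \<in> Bs")
      case True
      then have "dep x = dep y" using idx_B[of x] idx_B[of y] eq B_kk[of x] B_kk[of y] by auto
      then show False using B_inj True xy by blast
    next
      case False
      then show False using rb idx_r idx_B[of x] idx_B[of y] eq xy(1) by auto
    qed
  next
    case False
    then have nb: "x \<notin> Bs" "y \<notin> Bs" by auto
    show False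
    proof (cases "x \<in> set W \<and> y \<in> set W")
      case True
      then have "dep x = dep y" using idx_W eq by simp
      then show False using W_elem(3)[of x] W_elem(3)[of y] True xy by metis
    next
      case False
      show False
      proof (cases "x \<in> set W \<or> y \<in> set W")
        case True
        then show False using False idx_W[of x] idx_W[of y] idx_L[of x] idx_L[of y] xy nb eq by auto
      next
        case False
        then have px: "pth x = W @ [x]" and py: "pth y = W @ [y]" using side xy nb by auto
        have "tree_le TE r x y \<or> tree_le TE r y x" using nt assms by (simp add: normal_tree_def)
        then have "(y \<in> V \<and> x \<in> set (pth y)) \<or> (x \<in> V \<and> y \<in> set (pth x))" by (simp add: tle)
  then have "x \<in> set (pth y) \<or> y \<in> set (pth x)" by blast
        then show False using px py False xy by auto
      qed
    qed
  qed
qed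

lemma leaf_idx: assumes "tree_leaf V TE r x" shows "idx x = m + 1"
proof -
  have xV: "x \<in> V" and nc: "tree_children TE r x = {}" using assms by (auto simp: tree_leaf_def)
  show ?thesis
  proof (cases "x \<in> Bs")
    case True
    have "dep x = kk"
    proof (rule ccontr)
      assume "dep x \<noteq> kk"
      then have lt: "dep x < kk" using B_kk[OF True] by simp
      have "Bs \<noteq> {}" using True by blast
      then obtain z where z: "z \<in> Bs" "dep z = kk" using B_max by blast
      have px: "pth z ! dep x = x" using B_chain[OF True z(1)] lt z(2) by simp
      have "pth z ! Suc (dep x) \<in> tree_children TE r (pth z ! dep x)"
        using child_next[OF B_basic(1)[OF z(1)]] lt z(2) by simp
      then show False using nc px by simp
    qed
    then show ?thesis using idx_B[OF True] by simp
  next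
    case False
    show ?thesis
    proof (cases "x \<in> set W")
      case True
      note we = W_elem[OF True]
      show ?thesis
      proof (cases "dep x = m")
        case True
        have "x = W ! m" using we(3) True by simp
        then have "x = v" using W_m by (rule trans)
        obtain z where "z \<in> tree_children TE r v" using v_child by blast
        then have "z \<in> tree_children TE r x" using \<open>x = v\<close> by (rule ssubst[rotated])
        then show ?thesis using nc by blast
      next
        case False
        then have "dep x < m" using we(2) by simp
        then have "W ! Suc (dep x) \<in> tree_children TE r (W ! dep x)"
          using child_next[OF node(1)] by simp
        then show ?thesis using nc we(3) by simp
      qed
    next
      case False
      then show ?thesis using idx_L xV \<open>x \<notin> Bs\<close> by simp
    qed
  qed
qed

lemma no_sec: assumes "is_path TE xs" "hd xs = r" "i1 < i2" "i2 < j1" "j1 < j2" "j2 < length xs"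
  "{xs!i1, xs!j1} \<in> E" "{xs!i2, xs!j2} \<in> E" shows False
proof -
  have "secant TE r {xs!i1, xs!j1} {xs!i2, xs!j2}"
    unfolding secant_def
    apply (rule exI[of _ xs], rule exI[of _ i1], rule exI[of _ j1], rule exI[of _ i2], rule exI[of _ j2])
    using assms by auto
  then show False using ns assms(7,8) unfolding no_secant_edges_def by blast
qed

end

context wctx begin

lemma ss_posW: assumes "w \<in> set W" shows "idx w < length W \<and> W ! idx w = w"
  using idx_W[OF assms] W_elem[OF assms] W_len by simp

lemma ss_pos: assumes "w \<in> V" "w \<notin> Bs" "w \<in> set W \<or> w = l" "l \<notin> set W"
  shows "idx w < length (W @ [l]) \<and> (W @ [l]) ! idx w = w"
proof (cases "w \<in> set W")
  case True
  then show ?thesis using ss_posW[OF True] by (simp add: nth_append)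
next
  case False
  then have "w = l" "idx w = m + 1" using assms idx_L by auto
  then show ?thesis using W_len by (simp add: nth_append)
qed

lemma rb_pos: assumes "z \<in> Bs" "dep z = kk" "w \<in> Bs"
  shows "dep w < length (pth z) \<and> pth z ! dep w = w"
proof -
  have "dep w \<le> dep z" using B_kk[OF assms(3)] assms(2) by simp
  then show ?thesis using B_chain[OF assms(3,1)] pth_len[OF B_basic(1)[OF assms(1)]] by simp
qed

lemma noncross: assumes e1: "{x1,y1} \<in> E" and e2: "{x2,y2} \<in> E"
  and o: "idx x1 < idx x2" "idx x2 < idx y1" "idx y1 < idx y2" shows False
proof -
  have V: "x1 \<in> V" "y1 \<in> V" "x2 \<in> V" "y2 \<in> V" using eedge[OF e1] eedge[OF e2] by auto
  have e1': "{y1,x1} \<in> E" and e2': "{y2,x2} \<in> E" using e1 e2 by (simp_all add: insert_commute)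
  have rb1: "x1 \<in> Bs \<or> y1 \<in> Bs \<Longrightarrow> (x1 = r \<or> x1 \<in> Bs) \<and> (y1 = r \<or> y1 \<in> Bs)"
    using B_edge[OF e1] B_edge[OF e1'] by blast
  have rb2: "x2 \<in> Bs \<or> y2 \<in> Bs \<Longrightarrow> (x2 = r \<or> x2 \<in> Bs) \<and> (y2 = r \<or> y2 \<in> Bs)"
    using B_edge[OF e2] B_edge[OF e2'] by blast
  have nr: "x2 \<noteq> r" "y1 \<noteq> r" "y2 \<noteq> r" using o idx_r by auto
  consider (SS) "x1 \<notin> Bs" "y1 \<notin> Bs" "x2 \<notin> Bs" "y2 \<notin> Bs"
    | (M1) "x1 \<in> Bs \<or> y1 \<in> Bs" "x2 \<notin> Bs" "y2 \<notin> Bs"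
    | (M2) "x1 \<notin> Bs" "y1 \<notin> Bs" "x2 \<in> Bs \<or> y2 \<in> Bs"
    | (RB) "x1 \<in> Bs \<or> y1 \<in> Bs" "x2 \<in> Bs \<or> y2 \<in> Bs" by blast
  then show False
  proof cases
    case M1
    then have "y1 \<in> Bs" using rb1 nr by blast
    then show False using idx_B[of y1] idx_nB[OF V(4) M1(3)] o by simp
  next
    case M2
    then have "x2 \<in> Bs" using rb2 nr by blast
    then show False using idx_B[of x2] idx_nB[OF V(2) M2(2)] o by simp
  next
    case RB
    have b: "x2 \<in> Bs" "y1 \<in> Bs" "y2 \<in> Bs" using rb1[OF RB(1)] rb2[OF RB(2)] nr by auto
    have "Bs \<noteq> {}" using b by blast
    then obtain z where z: "z \<in> Bs" "dep z = kk" using B_max by blast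
    have zV: "z \<in> V" using B_basic(1)[OF z(1)] .
    note pz = pth(1,2)[OF zV]
    have p1: "dep x2 < length (pth z)" "pth z ! dep x2 = x2" using rb_pos[OF z b(1)] by auto
    have p2: "dep y1 < length (pth z)" "pth z ! dep y1 = y1" using rb_pos[OF z b(2)] by auto
    have p3: "dep y2 < length (pth z)" "pth z ! dep y2 = y2" using rb_pos[OF z b(3)] by auto
    have i1: "idx x2 = m + 1 + kk - dep x2" "1 \<le> dep x2" "dep x2 \<le> kk" using idx_B[OF b(1)] B_basic(4)[OF b(1)] B_kk[OF b(1)] by auto
    have i2: "idx y1 = m + 1 + kk - dep y1" "1 \<le> dep y1" "dep y1 \<le> kk" using idx_B[OF b(2)] B_basic(4)[OF b(2)] B_kk[OF b(2)] by auto
    have i3: "idx y2 = m + 1 + kk - dep y2" "1 \<le> dep y2" "dep y2 \<le> kk" using idx_B[OF b(3)] B_basic(4)[OF b(3)] B_kk[OF b(3)] by auto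
    have d1: "dep y2 < dep y1" using i2 i3 o(3) by arith
    have d2: "dep y1 < dep x2" using i1 i2 o(2) by arith
    show False
    proof (cases "x1 = r")
      case True
      have "{pth z ! 0, pth z ! dep y1} \<in> E" using e1 True pth0[OF zV] p2 by simp
      moreover have "{pth z ! dep y2, pth z ! dep x2} \<in> E" using e2' p1 p3 by simp
      ultimately show False using no_sec[OF pz, of 0 "dep y2" "dep y1" "dep x2"] i3 d1 d2 p1 by simp
    next
      case False
      then have bx: "x1 \<in> Bs" using rb1[OF RB(1)] by blast
      have p0: "dep x1 < length (pth z)" "pth z ! dep x1 = x1" using rb_pos[OF z bx] by auto
      have i0: "idx x1 = m + 1 + kk - dep x1" "1 \<le> dep x1" "dep x1 \<le> kk" using idx_B[OF bx] B_basic(4)[OF bx] B_kk[OF bx] by auto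
      have d3: "dep x2 < dep x1" using i0 i1 o(1) by arith
      have "{pth z ! dep y2, pth z ! dep x2} \<in> E" using e2' p1 p3 by simp
      moreover have "{pth z ! dep y1, pth z ! dep x1} \<in> E" using e1' p0 p2 by simp
      ultimately show False using no_sec[OF pz, of "dep y2" "dep y1" "dep x2" "dep x1"] d1 d2 d3 p0 by simp
    qed
  next
    case SS
    show False
    proof (cases "x1 \<in> set W \<and> y1 \<in> set W \<and> x2 \<in> set W \<and> y2 \<in> set W")
      case True
      have q1: "idx x1 < length W" "W ! idx x1 = x1" using ss_posW True by auto
      have q2: "idx y1 < length W" "W ! idx y1 = y1" using ss_posW True by auto
      have q3: "idx x2 < length W" "W ! idx x2 = x2" using ss_posW True by auto
      have q4: "idx y2 < length W" "W ! idx y2 = y2" using ss_posW True by auto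
      have "{W ! idx x1, W ! idx y1} \<in> E" "{W ! idx x2, W ! idx y2} \<in> E" using e1 e2 q1 q2 q3 q4 by simp_all
      then show False using no_sec[OF pth(1,2)[OF node(1)], of "idx x1" "idx x2" "idx y1" "idx y2"] o q4 by simp
    next
      case False
      then obtain l where l: "l \<in> {x1, y1, x2, y2}" "l \<notin> set W" by blast
      have lV: "l \<in> V" "l \<notin> Bs" using l V SS by auto
      have pl: "pth l = W @ [l]" using side[OF lV l(2)] .
      have inj: "\<And>w. w \<in> {x1, y1, x2, y2} \<Longrightarrow> idx w = idx l \<Longrightarrow> w = l"
        using l(1) o by auto
      have one: "w \<in> set W \<or> w = l" if "w \<in> {x1, y1, x2, y2}" for w
      proof (cases "w \<in> set W")
        case False
        have "w \<in> V" "w \<notin> Bs" using that V SS by auto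
        then have "idx w = idx l" using idx_L[OF _ _ False] idx_L[OF lV l(2)] by simp
        then show ?thesis using inj that by blast
      qed simp
      have q1: "idx x1 < length (W @ [l])" "(W @ [l]) ! idx x1 = x1" using ss_pos[OF V(1) SS(1) one l(2)] by auto
      have q2: "idx y1 < length (W @ [l])" "(W @ [l]) ! idx y1 = y1" using ss_pos[OF V(2) SS(2) one l(2)] by auto
      have q3: "idx x2 < length (W @ [l])" "(W @ [l]) ! idx x2 = x2" using ss_pos[OF V(3) SS(3) one l(2)] by auto
      have q4: "idx y2 < length (W @ [l])" "(W @ [l]) ! idx y2 = y2" using ss_pos[OF V(4) SS(4) one l(2)] by auto
      have pp: "is_path TE (W @ [l])" "hd (W @ [l]) = r" using pth(1,2)[OF lV(1)] pl by auto
      have "{(W @ [l]) ! idx x1, (W @ [l]) ! idx y1} \<in> E" "{(W @ [l]) ! idx x2, (W @ [l]) ! idx y2} \<in> E"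
        using e1 e2 q1 q2 q3 q4 by simp_all
      then show False using no_sec[OF pp, of "idx x1" "idx x2" "idx y1" "idx y2"] o q4 by simp
    qed
  qed
qed

end

theorem proposition4:
  fixes V :: "'a set" and E TE :: "'a set set" and r :: 'a
  assumes "simple_graph V E"
    and "spanning_tree V E TE"
    and "r \<in> V"
    and "normal_tree E TE r"
    and "no_secant_edges E TE r"
    and "whip V TE r"
  shows "\<exists>c. proper_3_coloring V E c \<and>
           (\<forall>x y. tree_leaf V TE r x \<and> tree_leaf V TE r y \<longrightarrow> c x = c y)"
proof -
  interpret wctx V E TE r using assms by unfold_locales
  define adj where "adj = (\<lambda>p q. \<exists>x y. {x,y} \<in> E \<and> idx x = p \<and> idx y = q)"
  have irr': "\<And>p. \<not> adj p p" unfolding adj_def using irr by metis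
  have sym': "\<And>p q. adj p q \<Longrightarrow> adj q p" unfolding adj_def by (metis insert_commute)
  have nc': "\<And>a b c d. adj a b \<Longrightarrow> adj c d \<Longrightarrow> a < c \<Longrightarrow> c < b \<Longrightarrow> b < d \<Longrightarrow> False"
    unfolding adj_def using noncross by blast
  have ex: "\<exists>col. (\<forall>x. col x < (3::nat)) \<and> col 0 = 0 \<and> col (m + kk + 1) = 1 \<and>
      (\<forall>x y. 0 \<le> x \<longrightarrow> x \<le> m + kk + 1 \<longrightarrow> 0 \<le> y \<longrightarrow> y \<le> m + kk + 1 \<longrightarrow> adj x y \<longrightarrow> col x \<noteq> col y)"
    apply (rule col_interval[where adj=adj])
          apply (rule irr')
         apply (erule sym')
        apply (metis nc')
       apply simp_all
    done
  then obtain col where col: "\<forall>x. col x < (3::nat)"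
    "\<forall>x y. 0 \<le> x \<longrightarrow> x \<le> m + kk + 1 \<longrightarrow> 0 \<le> y \<longrightarrow> y \<le> m + kk + 1 \<longrightarrow> adj x y \<longrightarrow> col x \<noteq> col y"
    by blast
  define c where "c = (\<lambda>x. col (idx x))"
  have "proper_3_coloring V E c"
    unfolding proper_3_coloring_def
  proof (intro conjI allI impI)
    show "c ` V \<subseteq> {0, 1, 2}"
    proof
      fix u assume "u \<in> c ` V"
      then have "u < 3" using col(1) unfolding c_def by auto
      then show "u \<in> {0, 1, 2}" by auto
    qed
  next
    fix x y assume e: "{x, y} \<in> E"
    have "x \<in> V" "y \<in> V" using eedge[OF e] by auto
    then have "idx x \<le> m + kk + 1" "idx y \<le> m + kk + 1" using idx_le by auto
    moreover have "adj (idx x) (idx y)" unfolding adj_def using e by blast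
    ultimately show "c x \<noteq> c y" using col(2) unfolding c_def by blast
  qed
  moreover have "\<forall>x y. tree_leaf V TE r x \<and> tree_leaf V TE r y \<longrightarrow> c x = c y"
    using leaf_idx unfolding c_def by simp
  ultimately show ?thesis by blast
qed

end
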